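(* Let $R$ be a finite ring with identity, $\alpha\in(0,1)$, and let $\pi_U$ be the stationary distribution of the Markov chain $(X^U_t)$ on $R$ defined below. Then for every $x\in R$, \[\pi_U(x)=\frac{\alpha+(1-\alpha)\displaystyle\sum_{y\in\phi,\ I_x\subsetneq I_y}|U_y|\,|\mathrm{LAnn}_R(y)|\,\pi_U(y)}{|R|-(1-\alpha)\,|U_x|\,|\mathrm{LAnn}_R(x)|}.\]
   Context: The chain $(X^U_t)$: at each step an independent coin with Heads probability $\alpha$ is tossed; on Heads, $X_{t+1}=X_t+Y$ with $Y$ uniform on $R$; on Tails, $X_{t+1}=Z\cdot X_t$ with $Z$ uniform on $R$ (all independent). $U_R$ is the unit group of $R$. For $a\in R$, $I_a=Ra$ is the principal left ideal generated by $a$; $\phi$ is a fixed set of generators of the distinct principal left ideals of $R$ (one per ideal). $\mathrm{LAnn}_R(y)=\{r\in R\mid ry=0\}$. $\mathrm{LStab}(x)=\{u\in U_R\mid ux=x\}$ and $U_x\subseteq U_R$ is a fixed set of distinct representatives of the left cosets of $\mathrm{LStab}(x)$ in $U_R$ (so $|U_x|=[U_R:\mathrm{LStab}(x)]$). *)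

theory Defs
  imports "HOL-Probability.Probability"
begin

definition chainU_step :: "real \<Rightarrow> 'a::{ring_1,finite} \<Rightarrow> 'a pmf" where
  "chainU_step \<alpha> x =
     bind_pmf (bernoulli_pmf \<alpha>)
       (\<lambda>b. if b then map_pmf (\<lambda>y. x + y) (pmf_of_set UNIV)
             else map_pmf (\<lambda>z. z * x) (pmf_of_set UNIV))"

definition stationaryU :: "real \<Rightarrow> 'a::{ring_1,finite} pmf \<Rightarrow> bool" where
  "stationaryU \<alpha> \<pi> \<longleftrightarrow> bind_pmf \<pi> (chainU_step \<alpha>) = \<pi>"

definition ring_units :: "'a::ring_1 set" where
  "ring_units = {u. \<exists>v. u * v = 1 \<and> v * u = 1}"

definition pl_ideal :: "'a::ring_1 \<Rightarrow> 'a set" where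
  "pl_ideal a = {r * a | r. True}"

definition LAnn :: "'a::ring_1 \<Rightarrow> 'a set" where
  "LAnn y = {r. r * y = 0}"

definition LStab :: "'a::ring_1 \<Rightarrow> 'a set" where
  "LStab x = {u \<in> ring_units. u * x = x}"

text \<open>The set of left cosets of LStab x in U_R; its cardinality is |U_x|.\<close>
definition LStab_cosets :: "'a::ring_1 \<Rightarrow> 'a set set" where
  "LStab_cosets x = (\<lambda>u. (\<lambda>s. u * s) ` LStab x) ` ring_units"

end

theory Submission
  imports Defs
begin

lemma pow_idem_exists:
  fixes c :: "'a::{monoid_mult,finite}"
  shows "\<exists>n\<ge>1. c^n * c^n = c^n"
proof -
  have "\<not> inj (\<lambda>i::nat. c^i)"
  proof
    assume "inj (\<lambda>i::nat. c^i)"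
    then have "infinite (range (\<lambda>i::nat. c^i))"
      using finite_imageD by blast
    then show False by simp
  qed
  then obtain i j :: nat where ij: "i \<noteq> j" "c^i = c^j" unfolding inj_def by blast
  then obtain i p where ip: "p \<ge> 1" "c^i = c^(i+p)"
  proof (cases "i < j")
    case True
    then show ?thesis using that[of "j - i" i] ij by simp
  next
    case False
    then have "j < i" using ij by simp
    then show ?thesis using that[of "i - j" j] ij by simp
  qed
  have per: "c^(m + p*q) = c^m" if "m \<ge> i" for m q
  proof (induction q)
    case 0 then show ?case by simp
  next
    case (Suc q)
    have "c^(m + p*Suc q) = c^(m - i) * c^(i+p) * c^(p*q)"
      using that by (simp add: power_add[symmetric] algebra_simps)
    also have "\<dots> = c^(m - i) * c^i * c^(p*q)" using ip by simp
    also have "\<dots> = c^(m + p*q)" using that by (simp add: power_add[symmetric] algebra_simps)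
    finally show ?case using Suc by simp
  qed
  define n where "n = p * (i+1)"
  have "n \<ge> 1" using ip by (auto simp: n_def)
  have "1*i \<le> p*i" using ip(1) by (rule mult_le_mono1)
  moreover have "n = p*i + p" by (simp add: n_def algebra_simps)
  ultimately have "n \<ge> i" by linarith
  have "c^n * c^n = c^(n + p*(i+1))" by (simp add: power_add[symmetric] n_def)
  also have "\<dots> = c^n" using per \<open>n \<ge> i\<close> by blast
  finally show ?thesis using \<open>n \<ge> 1\<close> by blast
qed

lemma card_split:
  fixes g h :: "'a::{ring_1,finite}" and N :: "'a set"
  assumes hh: "h*h = h"
  shows "card {x. g*x = x \<and> (\<forall>n\<in>N. n*x = 0)} =
    card {x. g*x = x \<and> x*h = x \<and> (\<forall>n\<in>N. n*x = 0)} *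
    card {x. g*x = x \<and> x*(1-h) = x \<and> (\<forall>n\<in>N. n*x = 0)}"
proof -
  let ?S = "{x. g*x = x \<and> (\<forall>n\<in>N. n*x = 0)}"
  let ?U = "{x. g*x = x \<and> x*h = x \<and> (\<forall>n\<in>N. n*x = 0)}"
  let ?V = "{x. g*x = x \<and> x*(1-h) = x \<and> (\<forall>n\<in>N. n*x = 0)}"
  have hh': "(1-h)*(1-h) = 1-h" using hh by (simp add: algebra_simps)
  have "bij_betw (\<lambda>x. (x*h, x*(1-h))) ?S (?U \<times> ?V)"
  proof (rule bij_betwI[where g="\<lambda>(u,v). u+v"])
    show "(\<lambda>x. (x*h, x*(1-h))) \<in> ?S \<rightarrow> ?U \<times> ?V"
    proof
      fix x assume x: "x \<in> ?S"
      have "g*(x*h) = x*h" "\<forall>n\<in>N. n*(x*h) = 0"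
        "g*(x*(1-h)) = x*(1-h)" "\<forall>n\<in>N. n*(x*(1-h)) = 0"
        using x by (auto simp: mult.assoc[symmetric])
      moreover have "x*h*h = x*h" "x*(1-h)*(1-h) = x*(1-h)"
        using hh hh' by (simp_all add: mult.assoc)
      ultimately show "(x*h, x*(1-h)) \<in> ?U \<times> ?V" by auto
    qed
    show "(\<lambda>(u,v). u+v) \<in> ?U \<times> ?V \<rightarrow> ?S"
      by (auto simp: distrib_left)
    show "(case (x*h, x*(1-h)) of (u,v) \<Rightarrow> u+v) = x" if "x \<in> ?S" for x
      by (simp add: algebra_simps)
    show "(\<lambda>x. (x*h, x*(1-h))) ((\<lambda>(u,w). u+w) uv) = uv" if H: "uv \<in> ?U \<times> ?V" for uv
    proof -
      obtain u w where uv: "uv = (u,w)" "u \<in> ?U" "w \<in> ?V" using H by (cases uv) auto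
      have "u*(1-h) = (u*h)*(1-h)" using uv by simp
      also have "\<dots> = u*(h - h*h)" by (simp add: algebra_simps)
      finally have u0: "u*(1-h) = 0" using hh by simp
      have "w*h = (w*(1-h))*h" using uv by simp
      also have "\<dots> = w*(h - h*h)" by (simp add: algebra_simps)
      finally have v0: "w*h = 0" using hh by simp
      have "(u+w)*h = u" using uv v0 by (simp add: distrib_right)
      moreover have "(u+w)*(1-h) = w" using uv u0 by (simp add: distrib_right)
      ultimately show ?thesis using uv by simp
    qed
  qed
  then show ?thesis by (simp add: bij_betw_same_card card_cartesian_product)
qed

lemma nat_cancel: "(k::nat)*a = k*b \<Longrightarrow> 0 < k \<Longrightarrow> a = b" by simp

lemma card_pos_mem: "(a::'a::finite) \<in> S \<Longrightarrow> card S > 0"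
proof -
  assume "a \<in> S"
  then have "S \<noteq> {}" by auto
  moreover have "finite S" by simp
  ultimately show ?thesis by (simp add: card_gt_0_iff)
qed

lemma card_corner_iso:
  fixes g e f p q :: "'a::{ring_1,finite}" and N :: "'a set"
  assumes "q*e = q" "p*f = p" "p*q = e" "q*p = f"
  shows "card {x. g*x = x \<and> x*f = x \<and> (\<forall>n\<in>N. n*x = 0)} =
         card {x. g*x = x \<and> x*e = x \<and> (\<forall>n\<in>N. n*x = 0)}"
proof (rule bij_betw_same_card[where f="\<lambda>x. x*q"], rule bij_betwI[where g="\<lambda>y. y*p"])
  show "(\<lambda>x. x*q) \<in> {x. g*x = x \<and> x*f = x \<and> (\<forall>n\<in>N. n*x = 0)} \<rightarrow>
         {x. g*x = x \<and> x*e = x \<and> (\<forall>n\<in>N. n*x = 0)}"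
    using assms by (auto simp: mult.assoc[symmetric]; simp add: mult.assoc)
  show "(\<lambda>y. y*p) \<in> {x. g*x = x \<and> x*e = x \<and> (\<forall>n\<in>N. n*x = 0)} \<rightarrow>
         {x. g*x = x \<and> x*f = x \<and> (\<forall>n\<in>N. n*x = 0)}"
    using assms by (auto simp: mult.assoc[symmetric]; simp add: mult.assoc)
  show "x*q*p = x" if "x \<in> {x. g*x = x \<and> x*f = x \<and> (\<forall>n\<in>N. n*x = 0)}" for x
    using that assms by (simp add: mult.assoc)
  show "y*p*q = y" if "y \<in> {x. g*x = x \<and> x*e = x \<and> (\<forall>n\<in>N. n*x = 0)}" for y
    using that assms by (simp add: mult.assoc)
qed

lemma mobius_count:
  fixes K :: "'b \<Rightarrow> 'c set"
  assumes fin: "finite A" "finite S1" "finite S2" and KA: "\<And>x. K x \<subseteq> A"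
    and G: "\<And>N. N \<subseteq> A \<Longrightarrow> card {x\<in>S1. N \<subseteq> K x} = card {x\<in>S2. N \<subseteq> K x}"
  shows "N \<subseteq> A \<Longrightarrow> card {x\<in>S1. K x = N} = card {x\<in>S2. K x = N}"
proof (induction "card (A - N)" arbitrary: N rule: less_induct)
  case less
  have decomp: "card {x\<in>S. N \<subseteq> K x} = card {x\<in>S. K x = N} +
      (\<Sum>M\<in>{M. N \<subset> M \<and> M \<subseteq> A}. card {x\<in>S. K x = M})" if "finite S" for S
  proof -
    have eq: "{x\<in>S. N \<subseteq> K x} = (\<Union>M\<in>{M. N \<subseteq> M \<and> M \<subseteq> A}. {x\<in>S. K x = M})"
      using KA by auto
    have fM: "finite {M. N \<subseteq> M \<and> M \<subseteq> A}" using fin(1) by auto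
    have "card {x\<in>S. N \<subseteq> K x} = card (\<Union>M\<in>{M. N \<subseteq> M \<and> M \<subseteq> A}. {x\<in>S. K x = M})"
      by (simp only: eq)
    also have "\<dots> = (\<Sum>M\<in>{M. N \<subseteq> M \<and> M \<subseteq> A}. card {x\<in>S. K x = M})"
      using that fM by (intro card_UN_disjoint) auto
    finally have "card {x\<in>S. N \<subseteq> K x} = (\<Sum>M\<in>{M. N \<subseteq> M \<and> M \<subseteq> A}. card {x\<in>S. K x = M})" .
    moreover have "{M. N \<subseteq> M \<and> M \<subseteq> A} = insert N {M. N \<subset> M \<and> M \<subseteq> A}"
      using less.prems by auto
    moreover have "finite {M. N \<subset> M \<and> M \<subseteq> A}" using fin(1) by auto
    ultimately show ?thesis by simp
  qed
  have IH: "card {x\<in>S1. K x = M} = card {x\<in>S2. K x = M}" if "M \<in> {M. N \<subset> M \<and> M \<subseteq> A}" for M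
  proof -
    have "card (A - M) < card (A - N)"
      using that fin(1) by (intro psubset_card_mono) auto
    then show ?thesis using less.hyps that by blast
  qed
  have "card {x\<in>S1. K x = N} + (\<Sum>M\<in>{M. N \<subset> M \<and> M \<subseteq> A}. card {x\<in>S1. K x = M}) =
        card {x\<in>S2. K x = N} + (\<Sum>M\<in>{M. N \<subset> M \<and> M \<subseteq> A}. card {x\<in>S2. K x = M})"
    using decomp[OF fin(2)] decomp[OF fin(3)] G[OF less.prems] by simp
  moreover have "(\<Sum>M\<in>{M. N \<subset> M \<and> M \<subseteq> A}. card {x\<in>S1. K x = M}) =
        (\<Sum>M\<in>{M. N \<subset> M \<and> M \<subseteq> A}. card {x\<in>S2. K x = M})"
    using IH by (rule sum.cong[OF refl])
  ultimately show ?case by simp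
qed

lemma complement_iso:
  fixes e f p q :: "'a::{ring_1,finite}"
  assumes ee: "e*e = e" and ff: "f*f = f" and qe: "q*e = q" and pf: "p*f = p"
    and pq: "p*q = e" and qp: "q*p = f"
  shows "\<exists>w w'. (1-f)*w = w \<and> w*(1-e) = w \<and> (1-e)*w' = w' \<and> w'*(1-f) = w' \<and>
                w'*w = 1-e \<and> w*w' = 1-f"
proof -
  define A where "A = {y::'a. y*(1-e) = y}"
  define K where "K x = {y\<in>A. y*x = 0}" for x
  define SA where "SA = {x::'a. (1-e)*x = x \<and> x*(1-e) = x}"
  define SB where "SB = {x::'a. (1-e)*x = x \<and> x*(1-f) = x}"
  have e1: "(1-e)*(1-e) = 1-e" using ee by (simp add: algebra_simps)
  have f1: "(1-f)*(1-f) = 1-f" using ff by (simp add: algebra_simps)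
  have G: "card {x\<in>SA. N \<subseteq> K x} = card {x\<in>SB. N \<subseteq> K x}" if "N \<subseteq> A" for N
  proof -
    have eqA: "{x\<in>SA. N \<subseteq> K x} = {x. (1-e)*x = x \<and> x*(1-e) = x \<and> (\<forall>n\<in>N. n*x = 0)}"
      using that by (auto simp: SA_def K_def)
    have eqB: "{x\<in>SB. N \<subseteq> K x} = {x. (1-e)*x = x \<and> x*(1-f) = x \<and> (\<forall>n\<in>N. n*x = 0)}"
      using that by (auto simp: SB_def K_def)
    note s1 = card_split[OF ee, of "1-e" N]
    note s2 = card_split[OF ff, of "1-e" N]
    note iso = card_corner_iso[OF qe pf pq qp, of "1-e" N]
    have pos: "card {x. (1-e)*x = x \<and> x*e = x \<and> (\<forall>n\<in>N. n*x = 0)} > 0"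
    proof -
      have "0 \<in> {x. (1-e)*x = x \<and> x*e = x \<and> (\<forall>n\<in>N. n*x = 0)}" by simp
      then show ?thesis by (rule card_pos_mem)
    qed
    have "card {x. (1-e)*x = x \<and> x*e = x \<and> (\<forall>n\<in>N. n*x = 0)} *
          card {x. (1-e)*x = x \<and> x*(1-e) = x \<and> (\<forall>n\<in>N. n*x = 0)} =
          card {x. (1-e)*x = x \<and> x*e = x \<and> (\<forall>n\<in>N. n*x = 0)} *
          card {x. (1-e)*x = x \<and> x*(1-f) = x \<and> (\<forall>n\<in>N. n*x = 0)}"
      using trans[OF sym[OF s1] s2] unfolding iso .
    then show ?thesis unfolding eqA eqB by (rule nat_cancel[OF _ pos])
  qed
  have KA: "K x \<subseteq> A" for x by (auto simp: K_def)
  have "{0} \<subseteq> A" by (simp add: A_def)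
  have mob: "card {x\<in>SA. K x = {0}} = card {x\<in>SB. K x = {0}}"
    by (rule mobius_count[OF _ _ _ KA G \<open>{0} \<subseteq> A\<close>]) auto
  have "1-e \<in> {x\<in>SA. K x = {0}}"
    using e1 by (auto simp: SA_def K_def A_def)
  then have "card {x\<in>SA. K x = {0}} > 0" by (rule card_pos_mem)
  then have "card {x\<in>SB. K x = {0}} \<noteq> 0" using mob by linarith
  then have "{x\<in>SB. K x = {0}} \<noteq> {}" by (metis card.empty)
  then obtain x where "x \<in> {x\<in>SB. K x = {0}}" by (meson ex_in_conv)
  then have x: "x \<in> SB" "K x = {0}" by simp_all
  have xinj: "y = 0" if "y \<in> A" "y*x = 0" for y using x(2) that by (auto simp: K_def)
  define B where "B = {y::'a. y*(1-f) = y}"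
  have cAB: "card A = card B"
  proof -
    note s1 = card_split[OF ee, of 1 "{}"]
    note s2 = card_split[OF ff, of 1 "{}"]
    note iso = card_corner_iso[OF qe pf pq qp, of 1 "{}"]
    have pos: "card {x::'a. 1*x = x \<and> x*e = x \<and> (\<forall>n\<in>{}. n*x = 0)} > 0"
      by (rule card_pos_mem[of 0]) simp
    have "card {x. 1*x = x \<and> x*e = x \<and> (\<forall>n\<in>{}. n*x = 0)} *
          card {x. 1*x = x \<and> x*(1-e) = x \<and> (\<forall>n\<in>{}. n*x = 0)} =
          card {x. 1*x = x \<and> x*e = x \<and> (\<forall>n\<in>{}. n*x = 0)} *
          card {x. 1*x = x \<and> x*(1-f) = x \<and> (\<forall>n\<in>{}. n*x = 0)}"
      using trans[OF sym[OF s1] s2] unfolding iso .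
    then have "card {x::'a. 1*x = x \<and> x*(1-e) = x \<and> (\<forall>n\<in>{}. n*x = 0)} = card {x::'a. 1*x = x \<and> x*(1-f) = x \<and> (\<forall>n\<in>{}. n*x = 0)}" by (rule nat_cancel[OF _ pos])
    then show ?thesis unfolding A_def B_def by simp
  qed
  have img: "(\<lambda>y. y*x) ` A = B"
  proof (rule card_subset_eq)
    show "finite B" by simp
    show "(\<lambda>y. y*x) ` A \<subseteq> B"
      using x(1) by (auto simp: B_def SB_def mult.assoc)
    have "inj_on (\<lambda>y. y*x) A"
    proof (rule inj_onI)
      fix y1 y2 assume "y1 \<in> A" "y2 \<in> A" "y1*x = y2*x"
      then have "y1*(1-e) - y2*(1-e) = y1 - y2" "(y1 - y2)*x = 0"
        by (simp_all add: A_def left_diff_distrib)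
      then have "y1 - y2 \<in> A" "(y1 - y2)*x = 0" by (simp_all add: A_def left_diff_distrib)
      then show "y1 = y2" using xinj[of "y1 - y2"] by simp
    qed
    then show "card ((\<lambda>y. y*x) ` A) = card B" using cAB by (simp add: card_image)
  qed
  have "1 - f \<in> B" using f1 by (simp add: B_def)
  then have "1 - f \<in> (\<lambda>y. y*x) ` A" using img by simp
  then obtain z where z: "z \<in> A" "z*x = 1-f" by (auto simp del: diff_add_cancel)
  define w where "w = (1-f)*z"
  have xB: "(1-e)*x = x" "x*(1-f) = x" using x(1) by (auto simp: SB_def)
  have zA: "z*(1-e) = z" using z(1) by (simp add: A_def)
  have w1: "(1-f)*w = w" unfolding w_def using f1 by (simp add: mult.assoc[symmetric])
  have w2: "w*(1-e) = w" unfolding w_def using zA by (simp add: mult.assoc)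
  have ww': "w*x = 1-f" unfolding w_def using z(2) f1 by (simp add: mult.assoc)
  have xz: "x*z = 1-e"
  proof -
    have "(x*z - (1-e))*x = x*(z*x) - (1-e)*x" by (simp only: left_diff_distrib mult.assoc)
    also have "\<dots> = 0" using z(2) xB by simp
    finally have h0: "(x*z - (1-e))*x = 0" .
    have "(x*z - (1-e))*(1-e) = x*(z*(1-e)) - (1-e)*(1-e)"
      by (simp only: left_diff_distrib mult.assoc)
    also have "\<dots> = x*z - (1-e)" using zA e1 by simp
    finally have "(x*z - (1-e))*(1-e) = x*z - (1-e)" .
    then have "x*z - (1-e) \<in> A" by (simp add: A_def)
    with h0 xinj[of "x*z - (1-e)"] show ?thesis by simp
  qed
  have "x*w = (x*(1-f))*z" unfolding w_def by (simp only: mult.assoc)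
  also have "\<dots> = 1-e" using xB xz by simp
  finally have "x*w = 1-e" .
  then show ?thesis using w1 w2 ww' xB by blast
qed

lemma pow_idem_both:
  fixes c d :: "'a::{monoid_mult,finite}"
  shows "\<exists>n\<ge>1. c^n * c^n = c^n \<and> d^n * d^n = d^n"
proof -
  obtain n1 where n1: "n1 \<ge> 1" "c^n1 * c^n1 = c^n1" using pow_idem_exists by blast
  obtain n2 where n2: "n2 \<ge> 1" "d^n2 * d^n2 = d^n2" using pow_idem_exists by blast
  have idp: "x^k = x" if "x*x = x" "k \<ge> 1" for x :: 'a and k
    using that(2)
  proof (induction k rule: dec_induct)
    case base then show ?case by simp
  next
    case (step k) then show ?case using that(1) by simp
  qed
  have "c^(n1*n2) = c^n1" using idp[OF n1(2) n2(1)] by (simp add: power_mult)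
  moreover have "d^(n1*n2) = d^n2" using idp[OF n2(2) n1(1)] by (simp add: power_mult mult.commute[of n1])
  moreover have "n1*n2 \<ge> 1" using n1 n2 by simp
  ultimately show ?thesis using n1 n2 by metis
qed

lemma zero_mid:
  fixes x y g h :: "'a::ring"
  assumes "x = x * g" "y = h * y" "g * h = 0"
  shows "x * y = 0"
proof -
  have "x * y = x * (g * h) * y" using assms(1,2) by (metis mult.assoc)
  then show ?thesis using assms(3) by simp
qed

lemma key_assoc:
  fixes a b s t :: "'a::{ring_1,finite}"
  assumes tb: "b = t * a" and sa: "a = s * b"
  shows "\<exists>u\<in>ring_units. u * a = b"
proof -
  define c where "c = s * t"
  define dd where "dd = t * s"
  obtain n where n: "n \<ge> 1" "c^n * c^n = c^n" "dd^n * dd^n = dd^n" using pow_idem_both by blast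
  then obtain m where nm: "n = Suc m" by (cases n) auto
  define e where "e = c^n"
  define f where "f = dd^n"
  have ee: "e * e = e" and ff: "f * f = f" using n by (simp_all add: e_def f_def)
  have ca: "c * a = a" using tb sa by (simp add: c_def mult.assoc)
  have cka: "c^k * a = a" for k
    by (induction k) (simp_all add: mult.assoc ca)
  have tc: "t * c^k = dd^k * t" for k
  proof (induction k)
    case 0 then show ?case by simp
  next
    case (Suc k)
    have "t * c^Suc k = t * s * (t * c^k)" by (simp add: c_def mult.assoc)
    also have "\<dots> = dd * (dd^k * t)" using Suc by (simp add: dd_def)
    finally show ?case by (simp add: mult.assoc)
  qed
  have cm: "c^m * c = e" and dm: "dd^m * dd = f"
    by (simp_all add: e_def f_def nm power_commutes)
  have ecm: "e * c^m = c^m * e" unfolding e_def by (metis power_add add.commute)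
  define q where "q = t * e"
  define p where "p = e * c^m * s * f"
  have te: "t * e = f * t" using tc[of n] by (simp add: e_def f_def)
  have qe: "q * e = q" by (simp add: q_def mult.assoc ee)
  have fq: "f * q = q" by (simp add: q_def te mult.assoc[symmetric] ff)
  have pf: "p * f = p" by (simp add: p_def mult.assoc ff)
  have ep: "e * p = p" by (simp add: p_def mult.assoc[symmetric] ee)
  have pq: "p * q = e"
  proof -
    have "p * q = e * c^m * s * (f * t) * e" by (simp add: p_def q_def mult.assoc)
    also have "\<dots> = e * (c^m * (s * t)) * (e * e)" by (simp add: te[symmetric] mult.assoc)
    also have "\<dots> = e * e * e" by (simp add: c_def[symmetric] cm ee)
    finally show ?thesis by (simp add: ee)
  qed
  have qp: "q * p = f"
  proof -
    have "q * p = (t * e) * (e * c^m) * s * f" by (simp add: p_def q_def mult.assoc)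
    also have "\<dots> = (t * e) * c^m * s * f"
    proof -
      have ee': "e * (e * X) = e * X" for X by (simp add: mult.assoc[symmetric] ee)
      show ?thesis by (simp add: mult.assoc ee')
    qed
    also have "\<dots> = f * (t * c^m) * s * f" by (simp add: te mult.assoc)
    also have "\<dots> = f * (dd^m * (t * s)) * f" by (simp add: tc mult.assoc)
    also have "\<dots> = f * f * f" by (simp add: dd_def[symmetric] dm)
    finally show ?thesis by (simp add: ff)
  qed
  have ea: "e * a = a" using cka by (simp add: e_def)
  have qa: "q * a = b" by (simp add: q_def mult.assoc ea tb)
  obtain w w' where w: "(1-f) * w = w" "w * (1-e) = w" "(1-e) * w' = w'" "w'*(1-f) = w'"
    "w'*w = 1-e" "w * w' = 1-f"
    using complement_iso[OF ee ff qe pf pq qp] by blast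
  define u where "u = q + w"
  define vv where "vv = p + w'"
  have e0: "e * (1-e) = 0" "(1-e) * e = 0" using ee by (simp_all add: algebra_simps)
  have f0: "f * (1-f) = 0" "(1-f) * f = 0" using ff by (simp_all add: algebra_simps)
  have z1: "q * w' = 0" by (rule zero_mid[OF qe[symmetric] w(3)[symmetric] e0(1)])
  have z2: "w * p = 0" by (rule zero_mid[OF w(2)[symmetric] ep[symmetric] e0(2)])
  have z3: "p * w = 0" by (rule zero_mid[OF pf[symmetric] w(1)[symmetric] f0(1)])
  have z4: "w' * q = 0" by (rule zero_mid[OF w(4)[symmetric] fq[symmetric] f0(2)])
  have "u * vv = q * p + q * w' + w * p + w * w'" by (simp add: u_def vv_def algebra_simps)
  then have uv: "u * vv = 1" using qp z1 z2 w(6) by simp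
  have "vv * u = p * q + p * w + w'*q + w'*w" by (simp add: u_def vv_def algebra_simps)
  then have vu: "vv * u = 1" using pq z3 z4 w(5) by simp
  have wa: "w * a = 0"
  proof -
    have "w * a = w * ((1-e) * a)" by (simp add: mult.assoc[symmetric] w(2))
    also have "(1-e) * a = 0" using ea by (simp add: left_diff_distrib)
    finally show ?thesis by simp
  qed
  have "u * a = b" using qa wa by (simp add: u_def distrib_right)
  moreover have "u \<in> ring_units" using uv vu by (auto simp: ring_units_def)
  ultimately show ?thesis by blast
qed

lemma step_pmf:
  fixes \<alpha> :: real and w x :: "'a::{ring_1,finite}"
  assumes "0 \<le> \<alpha>" "\<alpha> \<le> 1"
  shows "pmf (chainU_step \<alpha> w) x =
    \<alpha> / real CARD('a) + (1 - \<alpha>) * real (card {z. z * w = x}) / real CARD('a)"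
proof -
  have m1: "pmf (map_pmf (\<lambda>y. w + y) (pmf_of_set (UNIV::'a set))) x = 1 / real CARD('a)"
  proof -
    have "(\<lambda>y. w + y) -` {x} = {x - w}" by (auto simp: algebra_simps)
    then show ?thesis by (simp add: pmf_map measure_pmf_of_set)
  qed
  have m2: "pmf (map_pmf (\<lambda>z. z * w) (pmf_of_set (UNIV::'a set))) x = real (card {z. z * w = x}) / real CARD('a)"
  proof -
    have "(\<lambda>z. z * w) -` {x} = {z. z * w = x}" by auto
    then show ?thesis by (simp add: pmf_map measure_pmf_of_set)
  qed
  have "pmf (chainU_step \<alpha> w) x =
     (\<Sum>b\<in>UNIV. pmf (if b then map_pmf (\<lambda>y. w + y) (pmf_of_set UNIV)
             else map_pmf (\<lambda>z. z * w) (pmf_of_set UNIV)) x * pmf (bernoulli_pmf \<alpha>) b)"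
    unfolding chainU_step_def pmf_bind
    by (rule integral_measure_pmf_real) auto
  also have "\<dots> = \<alpha> / real CARD('a) + (1 - \<alpha>) * real (card {z. z * w = x}) / real CARD('a)"
    using assms by (simp add: UNIV_bool m1 m2)
  finally show ?thesis .
qed

lemma stat_eq:
  fixes \<alpha> :: real and \<pi> :: "'a::{ring_1,finite} pmf" and x :: 'a
  assumes "0 \<le> \<alpha>" "\<alpha> \<le> 1" "stationaryU \<alpha> \<pi>"
  shows "real CARD('a) * pmf \<pi> x =
     \<alpha> + (1 - \<alpha>) * (\<Sum>w\<in>UNIV. pmf \<pi> w * real (card {z. z * w = x}))"
proof -
  have C: "real CARD('a) > 0" by simp
  have "pmf \<pi> x = pmf (bind_pmf \<pi> (chainU_step \<alpha>)) x"
    using assms(3) by (simp add: stationaryU_def)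
  also have "\<dots> = (\<Sum>w\<in>UNIV. pmf (chainU_step \<alpha> w) x * pmf \<pi> w)"
    unfolding pmf_bind by (rule integral_measure_pmf_real) auto
  also have "\<dots> = (\<Sum>w\<in>UNIV. (\<alpha> / real CARD('a)) * pmf \<pi> w +
        ((1 - \<alpha>) / real CARD('a)) * (pmf \<pi> w * real (card {z. z * w = x})))"
    using assms(1,2) by (simp add: step_pmf algebra_simps)
  also have "\<dots> = (\<alpha> / real CARD('a)) * (\<Sum>w\<in>UNIV. pmf \<pi> w) +
        ((1 - \<alpha>) / real CARD('a)) * (\<Sum>w\<in>UNIV. pmf \<pi> w * real (card {z. z * w = x}))"
    by (simp add: sum.distrib sum_distrib_left)
  also have "(\<Sum>w\<in>UNIV. pmf \<pi> w) = 1" by (rule sum_pmf_eq_1) auto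
  finally have "pmf \<pi> x = (\<alpha> + (1 - \<alpha>) * (\<Sum>w\<in>UNIV. pmf \<pi> w * real (card {z. z * w = x}))) / real CARD('a)"
    by (simp add: add_divide_distrib)
  then show ?thesis using C by (simp add: field_simps)
qed

lemma fiber_card:
  fixes w x :: "'a::{ring_1,finite}"
  shows "card {z. z * w = x} = (if x \<in> pl_ideal w then card (LAnn w) else 0)"
proof (cases "x \<in> pl_ideal w")
  case True
  then obtain r where r: "x = r * w" by (auto simp: pl_ideal_def)
  have "{z. z * w = x} = (\<lambda>l. l + r) ` LAnn w"
  proof
    show "{z. z * w = x} \<subseteq> (\<lambda>l. l + r) ` LAnn w"
    proof
      fix z assume "z \<in> {z. z * w = x}"
      then have "(z - r) * w = 0" using r by (simp add: left_diff_distrib)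
      then have "z - r \<in> LAnn w" by (simp add: LAnn_def)
      then show "z \<in> (\<lambda>l. l + r) ` LAnn w" by (rule rev_image_eqI) simp
    qed
    show "(\<lambda>l. l + r) ` LAnn w \<subseteq> {z. z * w = x}"
      using r by (auto simp: LAnn_def distrib_right)
  qed
  moreover have "inj_on (\<lambda>l. l + r) (LAnn w)" by (rule inj_onI) simp
  ultimately show ?thesis using True by (simp add: card_image)
next
  case False
  then have "{z. z * w = x} = {}" by (auto simp: pl_ideal_def)
  then show ?thesis using False by simp
qed

lemma mem_pl_ideal_iff:
  fixes w x :: "'a::ring_1"
  shows "x \<in> pl_ideal w \<longleftrightarrow> pl_ideal x \<subseteq> pl_ideal w"
proof
  assume "x \<in> pl_ideal w"
  then obtain r where "x = r * w" by (auto simp: pl_ideal_def)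
  then show "pl_ideal x \<subseteq> pl_ideal w"
    unfolding pl_ideal_def by (auto simp: mult.assoc[symmetric])
next
  assume "pl_ideal x \<subseteq> pl_ideal w"
  moreover have "x \<in> pl_ideal x" by (auto simp: pl_ideal_def intro: exI[of _ 1])
  ultimately show "x \<in> pl_ideal w" by blast
qed

lemma same_ideal_unit:
  fixes w x :: "'a::{ring_1,finite}"
  assumes "pl_ideal w = pl_ideal x"
  shows "\<exists>u\<in>ring_units. u * x = w"
proof -
  have "w \<in> pl_ideal x" "x \<in> pl_ideal w" using assms mem_pl_ideal_iff by blast+
  then obtain t s where "w = t * x" "x = s * w" by (auto simp: pl_ideal_def)
  then show ?thesis using key_assoc by blast
qed

lemma units_mult: "u \<in> ring_units \<Longrightarrow> u' \<in> ring_units \<Longrightarrow> u * u' \<in> (ring_units :: 'a::ring_1 set)"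
proof -
  assume "u \<in> ring_units" "u' \<in> ring_units"
  then obtain v v' where "u * v = 1" "v * u = 1" "u' * v' = 1" "v' * u' = 1"
    by (auto simp: ring_units_def)
  then have "(u * u') * (v' * v) = 1" "(v' * v) * (u * u') = 1"
    by (simp_all add: mult.assoc[symmetric]) (simp_all add: mult.assoc)
  then show ?thesis by (auto simp: ring_units_def)
qed

lemma unit_mult_ideal:
  fixes u x :: "'a::ring_1"
  assumes "u \<in> ring_units"
  shows "pl_ideal (u * x) = pl_ideal x"
proof -
  obtain v where v: "v * u = 1" using assms by (auto simp: ring_units_def)
  have "u * x \<in> pl_ideal x" by (auto simp: pl_ideal_def)
  moreover have "x \<in> pl_ideal (u * x)"
    unfolding pl_ideal_def using v by (auto simp: mult.assoc[symmetric] intro!: exI[of _ v])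
  ultimately show ?thesis using mem_pl_ideal_iff by blast
qed

lemma LAnn_card_same:
  fixes w x :: "'a::{ring_1,finite}"
  assumes "pl_ideal w = pl_ideal x"
  shows "card (LAnn w) = card (LAnn x)"
proof -
  obtain u where u: "u \<in> ring_units" "u * x = w" using same_ideal_unit[OF assms] by blast
  then obtain vv where uv: "u * vv = 1" "vv * u = 1" by (auto simp: ring_units_def)
  have "LAnn w = (\<lambda>r. r * vv) ` LAnn x"
  proof
    show "LAnn w \<subseteq> (\<lambda>r. r * vv) ` LAnn x"
    proof
      fix r assume "r \<in> LAnn w"
      then have "r * u \<in> LAnn x" using u by (simp add: LAnn_def mult.assoc)
      moreover have "r = (r * u) * vv" using uv by (simp add: mult.assoc)
      ultimately show "r \<in> (\<lambda>r. r * vv) ` LAnn x" by blast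
    qed
    show "(\<lambda>r. r * vv) ` LAnn x \<subseteq> LAnn w"
    proof
      fix r assume "r \<in> (\<lambda>r. r * vv) ` LAnn x"
      then obtain l where l: "l \<in> LAnn x" "r = l * vv" by blast
      have "r * w = l * (vv * u) * x" using l u by (simp add: mult.assoc)
      then show "r \<in> LAnn w" using l uv by (simp add: LAnn_def)
    qed
  qed
  moreover have "inj_on (\<lambda>r. r * vv) (LAnn x)"
  proof (rule inj_onI)
    fix r1 r2 assume "r1 * vv = r2 * vv"
    then have "r1 * vv * u = r2 * vv * u" by simp
    then show "r1 = r2" using uv by (simp add: mult.assoc)
  qed
  ultimately show ?thesis by (simp add: card_image)
qed

lemma card_image_eqrel:
  assumes "\<And>a b. a \<in> U \<Longrightarrow> b \<in> U \<Longrightarrow> F a = F b \<longleftrightarrow> G a = G b"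
  shows "card (F ` U) = card (G ` U)"
proof -
  define h where "h X = G (SOME a. a \<in> U \<and> F a = X)" for X
  have hF: "h (F b) = G b" if "b \<in> U" for b
  proof -
    have "\<exists>a. a \<in> U \<and> F a = F b" using that by blast
    then have "(SOME a. a \<in> U \<and> F a = F b) \<in> U \<and> F (SOME a. a \<in> U \<and> F a = F b) = F b"
      by (rule someI_ex)
    then show ?thesis unfolding h_def using assms[of "SOME a. a \<in> U \<and> F a = F b" b] that by blast
  qed
  have "h ` (F ` U) = G ` U"
  proof
    show "h ` F ` U \<subseteq> G ` U" using hF by auto
    show "G ` U \<subseteq> h ` F ` U"
    proof
      fix y assume "y \<in> G ` U"
      then obtain b where "b \<in> U" "y = G b" by blast
      then have "y = h (F b)" using hF by simp
      then show "y \<in> h ` F ` U" using \<open>b \<in> U\<close> by blast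
    qed
  qed
  moreover have "inj_on h (F ` U)"
  proof (rule inj_onI)
    fix X Y assume "X \<in> F ` U" "Y \<in> F ` U" "h X = h Y"
    then obtain a b where "a \<in> U" "b \<in> U" "X = F a" "Y = F b" "G a = G b" using hF by auto
    then show "X = Y" using assms by blast
  qed
  ultimately show ?thesis by (metis card_image)
qed

lemma cosets_card:
  fixes x :: "'a::{ring_1,finite}"
  shows "card (LStab_cosets x) = card {w. pl_ideal w = pl_ideal x}"
proof -
  have one: "1 \<in> LStab x" by (auto simp: LStab_def ring_units_def)
  have eqv: "(\<lambda>s. a * s) ` LStab x = (\<lambda>s. b * s) ` LStab x \<longleftrightarrow> a * x = b * x"
    if a: "a \<in> ring_units" and b: "b \<in> ring_units" for a b
  proof
    assume "(\<lambda>s. a * s) ` LStab x = (\<lambda>s. b * s) ` LStab x"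
    moreover have "a \<in> (\<lambda>s. a * s) ` LStab x" using one by force
    ultimately obtain s where "s \<in> LStab x" "a = b * s" by auto
    then show "a * x = b * x" by (simp add: LStab_def mult.assoc)
  next
    assume abx: "a * x = b * x"
    have sub: "(\<lambda>s. a1 * s) ` LStab x \<subseteq> (\<lambda>s. b1 * s) ` LStab x"
      if H: "a1 \<in> ring_units" "b1 \<in> ring_units" "a1 * x = b1 * x" for a1 b1
    proof
      fix y assume "y \<in> (\<lambda>s. a1 * s) ` LStab x"
      then obtain s where s: "s \<in> LStab x" "y = a1 * s" by blast
      obtain bi where bi: "b1 * bi = 1" "bi * b1 = 1" "bi \<in> ring_units"
        using H(2) by (auto simp: ring_units_def)
      have "bi * a1 * s \<in> ring_units"
        using units_mult[OF units_mult[OF bi(3) H(1)]] s by (simp add: LStab_def)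
      moreover have "bi * a1 * s * x = x"
      proof -
        have "bi * a1 * s * x = bi * (a1 * x)" using s by (simp add: LStab_def mult.assoc)
        also have "\<dots> = bi * b1 * x" using H(3) by (simp add: mult.assoc)
        finally show ?thesis using bi by simp
      qed
      ultimately have "bi * a1 * s \<in> LStab x" by (simp add: LStab_def)
      moreover have "y = b1 * (bi * a1 * s)" using s bi by (simp add: mult.assoc[symmetric])
      ultimately show "y \<in> (\<lambda>s. b1 * s) ` LStab x" by blast
    qed
    show "(\<lambda>s. a * s) ` LStab x = (\<lambda>s. b * s) ` LStab x"
      using sub[OF a b abx] sub[OF b a abx[symmetric]] by blast
  qed
  have "card (LStab_cosets x) = card ((\<lambda>u. u * x) ` ring_units)"
    unfolding LStab_cosets_def by (rule card_image_eqrel) (rule eqv)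
  moreover have "(\<lambda>u. u * x) ` ring_units = {w. pl_ideal w = pl_ideal x}"
  proof
    show "(\<lambda>u. u * x) ` ring_units \<subseteq> {w. pl_ideal w = pl_ideal x}"
      using unit_mult_ideal by blast
    show "{w. pl_ideal w = pl_ideal x} \<subseteq> (\<lambda>u. u * x) ` ring_units"
    proof
      fix w assume "w \<in> {w. pl_ideal w = pl_ideal x}"
      then obtain u where "u \<in> ring_units" "u * x = w" using same_ideal_unit by blast
      then show "w \<in> (\<lambda>u. u * x) ` ring_units" by blast
    qed
  qed
  ultimately show ?thesis by simp
qed

lemma card_ideal_ann:
  fixes x :: "'a::{ring_1,finite}"
  shows "card (pl_ideal x) * card (LAnn x) = CARD('a)"
proof -
  have "(UNIV::'a set) = (\<Union>m\<in>pl_ideal x. {z. z * x = m})" by (auto simp: pl_ideal_def)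
  then have "CARD('a) = card (\<Union>m\<in>pl_ideal x. {z. z * x = m})" by simp
  also have "\<dots> = (\<Sum>m\<in>pl_ideal x. card {z. z * x = m})"
    by (rule card_UN_disjoint) auto
  also have "\<dots> = (\<Sum>m\<in>pl_ideal x. card (LAnn x))"
    by (rule sum.cong) (auto simp: fiber_card)
  finally show ?thesis by simp
qed

theorem corollary3p3:
  fixes \<alpha> :: real and \<pi> :: "'a::{ring_1,finite} pmf" and \<phi> :: "'a set" and x :: 'a
  assumes "0 < \<alpha>" and "\<alpha> < 1"
    and "stationaryU \<alpha> \<pi>"
    and "\<forall>a. \<exists>!y. y \<in> \<phi> \<and> pl_ideal y = pl_ideal a"
  shows "pmf \<pi> x =
    (\<alpha> + (1 - \<alpha>) * (\<Sum>y\<in>{y \<in> \<phi>. pl_ideal x \<subset> pl_ideal y}.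
        real (card (LStab_cosets y)) * real (card (LAnn y)) * pmf \<pi> y))
    / (real (card (UNIV :: 'a set)) - (1 - \<alpha>) * real (card (LStab_cosets x)) * real (card (LAnn x)))"
proof -
  have a0: "0 \<le> \<alpha>" "\<alpha> \<le> 1" using assms(1,2) by simp_all
  have Cpos: "real CARD('a) > 0" by simp
  have E: "real CARD('a) * pmf \<pi> y = \<alpha> + (1 - \<alpha>) *
      (\<Sum>w\<in>{w. pl_ideal y \<subseteq> pl_ideal w}. pmf \<pi> w * real (card (LAnn w)))" for y
  proof -
    have "(\<Sum>w\<in>UNIV. pmf \<pi> w * real (card {z. z * w = y})) =
          (\<Sum>w\<in>UNIV. if pl_ideal y \<subseteq> pl_ideal w then pmf \<pi> w * real (card (LAnn w)) else 0)"
      by (rule sum.cong) (auto simp: fiber_card mem_pl_ideal_iff)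
    also have "\<dots> = (\<Sum>w\<in>{w. pl_ideal y \<subseteq> pl_ideal w}. pmf \<pi> w * real (card (LAnn w)))"
      using sum.inter_filter[of UNIV "\<lambda>w. pmf \<pi> w * real (card (LAnn w))" "\<lambda>w. pl_ideal y \<subseteq> pl_ideal w"]
      by simp
    finally show ?thesis using stat_eq[OF a0 assms(3), of y] by simp
  qed
  have Psame: "pmf \<pi> w = pmf \<pi> y" if "pl_ideal w = pl_ideal y" for w y
  proof -
    have "real CARD('a) * pmf \<pi> w = real CARD('a) * pmf \<pi> y" using E[of w] E[of y] that by simp
    then show ?thesis using Cpos by simp
  qed
  define f where "f w = pmf \<pi> w * real (card (LAnn w))" for w
  define Eq where "Eq = {w. pl_ideal w = pl_ideal x}"
  define S where "S = {w. pl_ideal x \<subset> pl_ideal w}"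
  define Y where "Y = {y \<in> \<phi>. pl_ideal x \<subset> pl_ideal y}"
  have split: "{w. pl_ideal x \<subseteq> pl_ideal w} = Eq \<union> S" "Eq \<inter> S = {}"
    by (auto simp: Eq_def S_def)
  have sumEq: "(\<Sum>w\<in>Eq. f w) = real (card (LStab_cosets x)) * real (card (LAnn x)) * pmf \<pi> x"
  proof -
    have "(\<Sum>w\<in>Eq. f w) = (\<Sum>w\<in>Eq. pmf \<pi> x * real (card (LAnn x)))"
    proof (rule sum.cong[OF refl])
      fix w assume "w \<in> Eq"
      then have h: "pl_ideal w = pl_ideal x" by (simp add: Eq_def)
      show "f w = pmf \<pi> x * real (card (LAnn x))"
        unfolding f_def using Psame[OF h] LAnn_card_same[OF h] by simp
    qed
    then show ?thesis by (simp add: cosets_card Eq_def)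
  qed
  have sumS: "(\<Sum>w\<in>S. f w) = (\<Sum>y\<in>Y. real (card (LStab_cosets y)) * real (card (LAnn y)) * pmf \<pi> y)"
  proof -
    have SU: "S = (\<Union>y\<in>Y. {w. pl_ideal w = pl_ideal y})"
    proof
      show "S \<subseteq> (\<Union>y\<in>Y. {w. pl_ideal w = pl_ideal y})"
      proof
        fix w assume w: "w \<in> S"
        obtain y where y: "y \<in> \<phi>" "pl_ideal y = pl_ideal w" using assms(4) by blast
        have "pl_ideal x \<subset> pl_ideal y" using w y(2) by (simp add: S_def)
        then have "y \<in> Y" using y(1) by (simp add: Y_def)
        moreover have "w \<in> {w. pl_ideal w = pl_ideal y}" using y(2) by simp
        ultimately show "w \<in> (\<Union>y\<in>Y. {w. pl_ideal w = pl_ideal y})" by blast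
      qed
      show "(\<Union>y\<in>Y. {w. pl_ideal w = pl_ideal y}) \<subseteq> S" by (auto simp: S_def Y_def)
    qed
    have disj: "{w. pl_ideal w = pl_ideal y1} \<inter> {w. pl_ideal w = pl_ideal y2} = {}"
      if "y1 \<in> Y" "y2 \<in> Y" "y1 \<noteq> y2" for y1 y2
    proof (rule ccontr)
      assume "{w. pl_ideal w = pl_ideal y1} \<inter> {w. pl_ideal w = pl_ideal y2} \<noteq> {}"
      then have "pl_ideal y1 = pl_ideal y2" by auto
      moreover have "y1 \<in> \<phi>" "y2 \<in> \<phi>" using that by (auto simp: Y_def)
      ultimately show False using assms(4) that(3) by metis
    qed
    have "(\<Sum>w\<in>S. f w) = (\<Sum>y\<in>Y. \<Sum>w\<in>{w. pl_ideal w = pl_ideal y}. f w)"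
      unfolding SU by (rule sum.UNION_disjoint) (auto simp: disj)
    also have "\<dots> = (\<Sum>y\<in>Y. real (card (LStab_cosets y)) * real (card (LAnn y)) * pmf \<pi> y)"
    proof (rule sum.cong[OF refl])
      fix y assume "y \<in> Y"
      have "(\<Sum>w\<in>{w. pl_ideal w = pl_ideal y}. f w) = (\<Sum>w\<in>{w. pl_ideal w = pl_ideal y}. pmf \<pi> y * real (card (LAnn y)))"
      proof (rule sum.cong[OF refl])
        fix w assume "w \<in> {w. pl_ideal w = pl_ideal y}"
        then have h: "pl_ideal w = pl_ideal y" by simp
        show "f w = pmf \<pi> y * real (card (LAnn y))"
          unfolding f_def using Psame[OF h] LAnn_card_same[OF h] by simp
      qed
      then show "(\<Sum>w\<in>{w. pl_ideal w = pl_ideal y}. f w) = real (card (LStab_cosets y)) * real (card (LAnn y)) * pmf \<pi> y"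
        by (simp add: cosets_card)
    qed
    finally show ?thesis .
  qed
  define N where "N = real (card (LStab_cosets x)) * real (card (LAnn x))"
  define T where "T = (\<Sum>y\<in>Y. real (card (LStab_cosets y)) * real (card (LAnn y)) * pmf \<pi> y)"
  have main: "real CARD('a) * pmf \<pi> x = \<alpha> + (1 - \<alpha>) * (N * pmf \<pi> x + T)"
  proof -
    have "(\<Sum>w\<in>{w. pl_ideal x \<subseteq> pl_ideal w}. pmf \<pi> w * real (card (LAnn w))) = (\<Sum>w\<in>Eq \<union> S. f w)"
      unfolding split(1) f_def ..
    also have "\<dots> = (\<Sum>w\<in>Eq. f w) + (\<Sum>w\<in>S. f w)"
      by (rule sum.union_disjoint) (auto simp: split(2))
    finally show ?thesis using E[of x] sumEq sumS by (simp add: N_def T_def)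
  qed
  have NC: "N \<le> real CARD('a)"
  proof -
    have "Eq \<subseteq> pl_ideal x"
    proof
      fix w assume "w \<in> Eq"
      then have "pl_ideal w \<subseteq> pl_ideal x" by (simp add: Eq_def)
      then show "w \<in> pl_ideal x" using mem_pl_ideal_iff by blast
    qed
    then have "card Eq \<le> card (pl_ideal x)" by (simp add: card_mono)
    then have "card Eq * card (LAnn x) \<le> card (pl_ideal x) * card (LAnn x)" by simp
    then have "card (LStab_cosets x) * card (LAnn x) \<le> CARD('a)"
      using card_ideal_ann[of x] by (simp add: cosets_card Eq_def)
    then show ?thesis unfolding N_def by (metis of_nat_le_iff of_nat_mult)
  qed
  have N0: "N \<ge> 0" by (simp add: N_def)
  have Dpos: "real CARD('a) - (1 - \<alpha>) * N > 0"
  proof -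
    have "(1 - \<alpha>) * N \<le> (1 - \<alpha>) * real CARD('a)" using NC a0 by (intro mult_left_mono) simp_all
    also have "\<dots> < real CARD('a)" using assms(1) Cpos by simp
    finally show ?thesis by simp
  qed
  have "pmf \<pi> x * (real CARD('a) - (1 - \<alpha>) * N) = \<alpha> + (1 - \<alpha>) * T"
    using main by (simp add: algebra_simps)
  then have "pmf \<pi> x = (\<alpha> + (1 - \<alpha>) * T) / (real CARD('a) - (1 - \<alpha>) * N)"
    using Dpos by (simp add: eq_divide_eq)
  then show ?thesis by (simp add: N_def T_def Y_def mult.assoc)
qed

end
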